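(* For every $C>1$ there are $\varepsilon>0$ and $n_C\in\mathbb N$ such that the following holds. If $G=(V_1,V_2,E)$ is a $C$-bipartite-Ramsey graph with $|V_1|\ge|V_2|/2\ge n_C$, then either $V_1$ contains an $\varepsilon$-pair-star of size $|V_1|^{0.5}$, or $V_1$ contains an $\varepsilon$-pair-matching of size $|V_1|^{0.5}$.
   Context: A bipartite graph $G=(V_1,V_2,E)$ has vertex set $V_1\sqcup V_2$ and edge set $E\subset V_1\times V_2$; $N(v)$ is the neighbourhood and $d(v)$ the degree of $v$. Given $C>0$, $G$ is $C$-bipartite-Ramsey if for all integers $t_1\ge C\log_2|V_1|$, $t_2\ge C\log_2|V_2|$ there are no $T_1\subset V_1$, $T_2\subset V_2$ with $|T_1|=t_1$, $|T_2|=t_2$ such that all pairs in $T_1\times T_2$ are edges, or all are non-edges. For $u,v\in V_1$, $\mathrm{div}(u,v)=N(u)\triangle N(v)$ and $\mathrm{divb}(u,v)$ is the larger of $N(u)\setminus N(v)$, $N(v)\setminus N(u)$ (either if equal). Ordered pairs $\mathbf p=(u,v)$ of distinct vertices are written so that $\mathrm{divb}(\mathbf p)=N(u)\setminus N(v)$, and $d_{\mathbf p}:=d(u)-d(v)$. An $\varepsilon$-pair-star of size $k$ (associated to $V_1$) rooted at $x_0$ is a set $\{x_0,x_1,\ldots,x_k\}\subset V_1$ with $|d(x_j)-d(x_0)|\le|V_2|^{0.5}$ for all $j\in[k]$ and $|\mathrm{div}(x_i,x_j)|\ge\varepsilon|V_2|$ for all $i\ne j$ in $\{0,\ldots,k\}$.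 An $\varepsilon$-pair-matching of size $k$ (associated to $V_1$) is a collection of pairwise vertex-disjoint ordered pairs $\mathbf p_i=(x_i,y_i)$, $i\in[k]$, of vertices of $V_1$ with $d_{\mathbf p_i}\le|V_2|^{0.5}$ for all $i$, and $|\mathrm{divb}(\mathbf p_i)\setminus N(x_j)|\ge\varepsilon|V_2|$ and $|\mathrm{divb}(\mathbf p_i)\setminus N(y_j)|\ge\varepsilon|V_2|$ for all $i\ne j$ in $[k]$. Floors/ceilings of non-integer sizes are ignored. *)

theory Defs
  imports "HOL-Analysis.Analysis"
begin

definition bipartite_graph :: "nat set \<Rightarrow> nat set \<Rightarrow> (nat \<times> nat) set \<Rightarrow> bool" where
  "bipartite_graph V1 V2 E \<longleftrightarrow> finite V1 \<and> finite V2 \<and> E \<subseteq> V1 \<times> V2"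

definition nbhd :: "nat set \<Rightarrow> (nat \<times> nat) set \<Rightarrow> nat \<Rightarrow> nat set" where
  "nbhd V2 E v = {w \<in> V2. (v, w) \<in> E}"

definition deg :: "nat set \<Rightarrow> (nat \<times> nat) set \<Rightarrow> nat \<Rightarrow> nat" where
  "deg V2 E v = card (nbhd V2 E v)"

definition bip_ramsey :: "real \<Rightarrow> nat set \<Rightarrow> nat set \<Rightarrow> (nat \<times> nat) set \<Rightarrow> bool" where
  "bip_ramsey C V1 V2 E \<longleftrightarrow>
     (\<forall>t1 t2 :: nat. real t1 \<ge> C * log 2 (real (card V1)) \<longrightarrow> real t2 \<ge> C * log 2 (real (card V2)) \<longrightarrow>
        \<not> (\<exists>T1 T2. T1 \<subseteq> V1 \<and> T2 \<subseteq> V2 \<and> card T1 = t1 \<and> card T2 = t2 \<and>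
               (T1 \<times> T2 \<subseteq> E \<or> (T1 \<times> T2) \<inter> E = {})))"

definition divset :: "nat set \<Rightarrow> (nat \<times> nat) set \<Rightarrow> nat \<Rightarrow> nat \<Rightarrow> nat set" where
  "divset V2 E u v = nbhd V2 E u - nbhd V2 E v \<union> (nbhd V2 E v - nbhd V2 E u)"

definition divb :: "nat set \<Rightarrow> (nat \<times> nat) set \<Rightarrow> nat \<Rightarrow> nat \<Rightarrow> nat set" where
  "divb V2 E u v = (if card (nbhd V2 E v - nbhd V2 E u) \<le> card (nbhd V2 E u - nbhd V2 E v)
                    then nbhd V2 E u - nbhd V2 E v else nbhd V2 E v - nbhd V2 E u)"

definition pair_star ::
  "real \<Rightarrow> nat set \<Rightarrow> nat set \<Rightarrow> (nat \<times> nat) set \<Rightarrow> nat \<Rightarrow> nat set \<Rightarrow> nat \<Rightarrow> bool" where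
  "pair_star eps V1 V2 E x0 X k \<longleftrightarrow>
     x0 \<in> V1 \<and> X \<subseteq> V1 \<and> x0 \<notin> X \<and> card X = k \<and>
     (\<forall>x \<in> X. \<bar>real (deg V2 E x) - real (deg V2 E x0)\<bar> \<le> real (card V2) powr 0.5) \<and>
     (\<forall>x \<in> insert x0 X. \<forall>y \<in> insert x0 X. x \<noteq> y \<longrightarrow>
        real (card (divset V2 E x y)) \<ge> eps * real (card V2))"

text \<open>An eps-pair-matching of size k: ordered pairs p i = (x_i, y_i), i < k, of distinct
  vertices of V1, pairwise vertex-disjoint, written so that divb(p_i) = N(x_i) - N(y_i).\<close>
definition pair_matching ::
  "real \<Rightarrow> nat set \<Rightarrow> nat set \<Rightarrow> (nat \<times> nat) set \<Rightarrow> (nat \<Rightarrow> nat \<times> nat) \<Rightarrow> nat \<Rightarrow> bool" where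
  "pair_matching eps V1 V2 E p k \<longleftrightarrow>
     (\<forall>i < k. fst (p i) \<in> V1 \<and> snd (p i) \<in> V1 \<and> fst (p i) \<noteq> snd (p i) \<and>
        divb V2 E (fst (p i)) (snd (p i)) = nbhd V2 E (fst (p i)) - nbhd V2 E (snd (p i)) \<and>
        real (deg V2 E (fst (p i))) - real (deg V2 E (snd (p i))) \<le> real (card V2) powr 0.5) \<and>
     (\<forall>i < k. \<forall>j < k. i \<noteq> j \<longrightarrow>
        {fst (p i), snd (p i)} \<inter> {fst (p j), snd (p j)} = {} \<and>
        real (card (divb V2 E (fst (p i)) (snd (p i)) - nbhd V2 E (fst (p j)))) \<ge> eps * real (card V2) \<and>
        real (card (divb V2 E (fst (p i)) (snd (p i)) - nbhd V2 E (snd (p j)))) \<ge> eps * real (card V2))"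

end

theory Submission
  imports Defs "HOL-Real_Asymp.Real_Asymp"
begin

lemma card_filter_sum: "finite A \<Longrightarrow> card {a\<in>A. P a} = (\<Sum>a\<in>A. if P a then 1 else 0)"
  by (simp add: sum.If_cases Int_def)

lemma double_count:
  assumes "finite A" "finite B"
  shows "(\<Sum>a\<in>A. card {b\<in>B. P a b}) = (\<Sum>b\<in>B. card {a\<in>A. P a b})"
proof -
  have "(\<Sum>a\<in>A. card {b\<in>B. P a b}) = (\<Sum>a\<in>A. \<Sum>b\<in>B. if P a b then 1 else 0)"
    using assms by (simp add: card_filter_sum)
  also have "\<dots> = (\<Sum>b\<in>B. \<Sum>a\<in>A. if P a b then 1 else 0)" by (rule sum.swap)
  also have "\<dots> = (\<Sum>b\<in>B. card {a\<in>A. P a b})"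
    using assms by (simp add: card_filter_sum)
  finally show ?thesis .
qed

lemma greedy:
  fixes S :: "'a set" and D :: "'b set" and Q :: "'a \<Rightarrow> 'b \<Rightarrow> bool" and \<delta> :: real
  assumes fin: "finite S" "finite D" and d0: "0 \<le> \<delta>" "\<delta> \<le> 1/2"
    and hyp: "\<forall>v\<in>S. real (card {w\<in>D. \<not> Q v w}) \<le> \<delta> * card D"
  shows "2*j \<le> card D \<Longrightarrow> \<exists>T2 \<subseteq> D. card T2 = j \<and>
           real (card {v\<in>S. \<forall>w\<in>T2. Q v w}) \<ge> (1-2*\<delta>)^j * card S"
proof (induction j)
  case 0
  show ?case by (rule exI[of _ "{}"]) simp
next
  case (Suc j)
  then obtain T2 where T2: "T2 \<subseteq> D" "card T2 = j"
    and big: "real (card {v\<in>S. \<forall>w\<in>T2. Q v w}) \<ge> (1-2*\<delta>)^j * card S" by auto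
  define T1 where "T1 = {v\<in>S. \<forall>w\<in>T2. Q v w}"
  define D' where "D' = D - T2"
  have finT1: "finite T1" using fin unfolding T1_def by auto
  have finD': "finite D'" using fin unfolding D'_def by auto
  have cD': "card D' = card D - j" unfolding D'_def using T2 fin
    by (simp add: card_Diff_subset finite_subset)
  have cD'2: "2 * real (card D') \<ge> real (card D)" "card D' > 0" using cD' Suc.prems by auto
  have "\<exists>w\<in>D'. real (card {v\<in>T1. \<not> Q v w}) \<le> 2*\<delta> * card T1"
  proof (rule ccontr)
    assume "\<not> ?thesis"
    hence lt: "\<forall>w\<in>D'. 2*\<delta> * card T1 < real (card {v\<in>T1. \<not> Q v w})" by auto
    have "(\<Sum>w\<in>D'. 2*\<delta> * card T1) < (\<Sum>w\<in>D'. real (card {v\<in>T1. \<not> Q v w}))"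
      using lt finD' cD'2 by (intro sum_strict_mono) auto
    also have "\<dots> = real (\<Sum>w\<in>D'. card {v\<in>T1. \<not> Q v w})" by simp
    also have "(\<Sum>w\<in>D'. card {v\<in>T1. \<not> Q v w}) = (\<Sum>v\<in>T1. card {w\<in>D'. \<not> Q v w})"
      using double_count[OF finD' finT1, of "\<lambda>w v. \<not> Q v w"] by simp
    also have "real \<dots> = (\<Sum>v\<in>T1. real (card {w\<in>D'. \<not> Q v w}))" by simp
    also have "\<dots> \<le> (\<Sum>v\<in>T1. \<delta> * card D)"
    proof (rule sum_mono)
      fix v assume "v \<in> T1"
      hence "v \<in> S" unfolding T1_def by auto
      have "card {w\<in>D'. \<not> Q v w} \<le> card {w\<in>D. \<not> Q v w}"
        using fin unfolding D'_def by (intro card_mono) auto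
      thus "real (card {w\<in>D'. \<not> Q v w}) \<le> \<delta> * card D" using hyp \<open>v\<in>S\<close> by force
    qed
    also have "\<dots> = card T1 * \<delta> * card D" by simp
    also have "\<dots> \<le> card T1 * \<delta> * (2 * card D')"
      using cD'2 d0 by (intro mult_left_mono) auto
    also have "\<dots> = (\<Sum>w\<in>D'. 2*\<delta> * card T1)" by simp
    finally show False by simp
  qed
  then obtain w where w: "w \<in> D'" "real (card {v\<in>T1. \<not> Q v w}) \<le> 2*\<delta> * card T1" by auto
  have eq: "{v\<in>S. \<forall>u\<in>insert w T2. Q v u} = T1 - {v\<in>T1. \<not> Q v w}"
    unfolding T1_def by auto
  have "real (card (T1 - {v\<in>T1. \<not> Q v w})) = card T1 - real (card {v\<in>T1. \<not> Q v w})"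
    using finT1 by (subst card_Diff_subset) (auto intro!: of_nat_diff card_mono)
  also have "\<dots> \<ge> (1-2*\<delta>) * card T1" using w by (simp add: algebra_simps)
  finally have A: "real (card {v\<in>S. \<forall>u\<in>insert w T2. Q v u}) \<ge> (1-2*\<delta>) * card T1"
    using eq by simp
  have "(1-2*\<delta>)^Suc j * card S = (1-2*\<delta>) * ((1-2*\<delta>)^j * card S)" by simp
  also have "\<dots> \<le> (1-2*\<delta>) * card T1" using big d0 unfolding T1_def
    by (intro mult_left_mono) auto
  finally have B: "(1-2*\<delta>)^Suc j * card S \<le> real (card {v\<in>S. \<forall>u\<in>insert w T2. Q v u})"
    using A by linarith
  have "w \<notin> T2" "w \<in> D" using w unfolding D'_def by auto
  hence "card (insert w T2) = Suc j" using T2 fin by (simp add: finite_subset)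
  thus ?case using B T2 \<open>w\<in>D\<close> by (intro exI[of _ "insert w T2"]) auto
qed

lemma indep:
  fixes P :: "'a set" and R :: "'a \<Rightarrow> 'a \<Rightarrow> bool" and L :: real
  assumes "finite P" "\<forall>i\<in>P. real (card {j\<in>P. R i j}) \<le> L" "L \<ge> 0"
  shows "\<exists>I\<subseteq>P. real (card I) * (2*L+1) \<ge> card P \<and> (\<forall>i\<in>I. \<forall>j\<in>I. i\<noteq>j \<longrightarrow> \<not> R i j)"
  using assms
proof (induction "card P" arbitrary: P rule: less_induct)
  case less
  show ?case
  proof (cases "P = {}")
    case True thus ?thesis by auto
  next
    case False
    have "\<exists>i\<in>P. real (card {j\<in>P. R j i}) \<le> L"
    proof (rule ccontr)
      assume "\<not> ?thesis"
      hence lt: "\<forall>i\<in>P. L < real (card {j\<in>P. R j i})" by auto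
      have "(\<Sum>i\<in>P. L) < (\<Sum>i\<in>P. real (card {j\<in>P. R j i}))"
        using lt less.prems False by (intro sum_strict_mono) auto
      also have "\<dots> = real (\<Sum>i\<in>P. card {j\<in>P. R j i})" by simp
      also have "(\<Sum>i\<in>P. card {j\<in>P. R j i}) = (\<Sum>j\<in>P. card {i\<in>P. R j i})"
        using double_count[OF less.prems(1) less.prems(1), of "\<lambda>i j. R j i"] by simp
      also have "real \<dots> = (\<Sum>j\<in>P. real (card {i\<in>P. R j i}))" by simp
      also have "\<dots> \<le> (\<Sum>j\<in>P. L)" using less.prems by (intro sum_mono) auto
      finally show False by simp
    qed
    then obtain i where i: "i \<in> P" "real (card {j\<in>P. R j i}) \<le> L" by auto
    define Nb where "Nb = {j\<in>P. R i j} \<union> {j\<in>P. R j i}"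
    define P' where "P' = P - insert i Nb"
    have finNb: "finite Nb" using less.prems unfolding Nb_def by auto
    have cNb: "real (card Nb) \<le> 2*L"
    proof -
      have "card Nb \<le> card {j\<in>P. R i j} + card {j\<in>P. R j i}" unfolding Nb_def by (rule card_Un_le)
      thus ?thesis using i less.prems by force
    qed
    have "card (insert i Nb) \<le> card Nb + 1" by (simp add: card_insert_le_m1 finNb card_insert_if)
    hence cins: "real (card (insert i Nb)) \<le> 2*L + 1" using cNb by linarith
    have sub: "insert i Nb \<subseteq> P" using i unfolding Nb_def by auto
    have cP': "card P' = card P - card (insert i Nb)" unfolding P'_def
      using sub less.prems(1) by (meson card_Diff_subset finite_subset)
    have cP'r: "real (card P') \<ge> card P - (2*L+1)"
      using cP' cins card_mono[OF less.prems(1) sub] by (simp add: of_nat_diff)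
    have lt: "card P' < card P" unfolding P'_def using i less.prems(1)
      by (intro psubset_card_mono) auto
    have finP': "finite P'" using less.prems(1) unfolding P'_def by auto
    have hP': "\<forall>i\<in>P'. real (card {j\<in>P'. R i j}) \<le> L"
    proof
      fix k assume "k \<in> P'"
      hence "k \<in> P" unfolding P'_def by auto
      have "card {j\<in>P'. R k j} \<le> card {j\<in>P. R k j}"
        using less.prems(1) unfolding P'_def by (intro card_mono) auto
      thus "real (card {j\<in>P'. R k j}) \<le> L" using less.prems(2) \<open>k\<in>P\<close> by force
    qed
    obtain I where I: "I \<subseteq> P'" "real (card I) * (2*L+1) \<ge> card P'"
      "\<forall>i\<in>I. \<forall>j\<in>I. i\<noteq>j \<longrightarrow> \<not> R i j"
      using less.hyps[OF lt finP' hP' less.prems(3)] by auto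
    have iI: "i \<notin> I" using I(1) unfolding P'_def by auto
    have finI: "finite I" using I(1) finP' finite_subset by auto
    have "real (card (insert i I)) * (2*L+1) = real (card I) * (2*L+1) + (2*L+1)"
      using iI finI by (simp add: algebra_simps)
    also have "\<dots> \<ge> card P" using I(2) cP'r by linarith
    finally have C1: "real (card (insert i I)) * (2*L+1) \<ge> card P" .
    have C2: "\<forall>a\<in>insert i I. \<forall>b\<in>insert i I. a\<noteq>b \<longrightarrow> \<not> R a b"
      using I(1,3) unfolding P'_def Nb_def by blast
    show ?thesis using C1 C2 I(1) i(1) unfolding P'_def by (intro exI[of _ "insert i I"]) auto
  qed
qed



lemma ramsey_bound:
  fixes \<delta> :: real and C :: real
  assumes bg: "bipartite_graph V1 V2 E" and rams: "bip_ramsey C V1 V2 E"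
    and SV: "S \<subseteq> V1" and DV: "D \<subseteq> V2" and d0: "0 \<le> \<delta>" "\<delta> < 1/2"
    and t2D: "2*t2 \<le> card D"
    and t1: "t1 = nat \<lceil>C * log 2 (card V1)\<rceil>" and t2: "t2 = nat \<lceil>C * log 2 (card V2)\<rceil>"
    and hyp: "\<forall>v\<in>S. real (card {w\<in>D. ((v,w)\<in>E) \<noteq> b}) \<le> \<delta> * card D"
  shows "real (card S) * (1-2*\<delta>)^t2 < t1"
proof (rule ccontr)
  assume "\<not> ?thesis"
  hence ge: "real t1 \<le> real (card S) * (1-2*\<delta>)^t2" by simp
  have fin: "finite V1" "finite V2" using bg unfolding bipartite_graph_def by auto
  have finS: "finite S" and finD: "finite D" using fin SV DV finite_subset by auto
  obtain T2 where T2: "T2 \<subseteq> D" "card T2 = t2"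
    and big: "real (card {v\<in>S. \<forall>w\<in>T2. ((v,w)\<in>E) = b}) \<ge> (1-2*\<delta>)^t2 * card S"
    using greedy[OF finS finD d0(1) _ _ t2D, of "\<lambda>v w. ((v,w)\<in>E) = b"] d0 hyp by auto
  have "t1 \<le> card {v\<in>S. \<forall>w\<in>T2. ((v,w)\<in>E) = b}" using big ge by (simp add: mult.commute)
  then obtain T1 where T1: "T1 \<subseteq> {v\<in>S. \<forall>w\<in>T2. ((v,w)\<in>E) = b}" "card T1 = t1"
    by (meson obtain_subset_with_card_n)
  have hom: "T1 \<times> T2 \<subseteq> E \<or> (T1 \<times> T2) \<inter> E = {}"
    using T1(1) by (cases b) auto
  have r1: "real t1 \<ge> C * log 2 (card V1)" unfolding t1 by linarith
  have r2: "real t2 \<ge> C * log 2 (card V2)" unfolding t2 by linarith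
  show False using rams r1 r2 T1 T2 SV DV hom unfolding bip_ramsey_def by blast
qed



lemma div_eq_close: "(a::nat) div s = b div s \<Longrightarrow> s > 0 \<Longrightarrow> a < b + s"
proof -
  assume h: "a div s = b div s" "s > 0"
  have "a = s * (a div s) + a mod s" by simp
  also have "\<dots> < s * (a div s) + s" using mod_less_divisor[OF h(2), of a] by linarith
  also have "\<dots> \<le> b + s" using h(1) by (metis add_le_cancel_right div_mult_mod_eq le_add1 mult.commute)
  finally show ?thesis .
qed

lemma Lr_bound:
  fixes C q :: real and n m t1 t2 :: nat
  assumes C: "C > 1" and q: "q = 2 powr (-1/(8*C))" and m: "m \<ge> 1" "real m \<le> 2 * n" and n: "n \<ge> 1"
    and t1: "t1 = nat \<lceil>C * log 2 (real n)\<rceil>" and t2: "t2 = nat \<lceil>C * log 2 (real m)\<rceil>"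
  shows "real t1 / q^t2 \<le> (C * log 2 n + 1) * (2*n) powr (1/8) / q"
proof -
  have "2 powr (-1/(8*C)) < 2 powr 0" using C by (intro powr_less_mono) auto
  hence q0: "0 < q" "q \<le> 1" unfolding q using C by auto
  have l1: "C * log 2 n \<ge> 0" using C n by auto
  have l2: "C * log 2 m \<ge> 0" using C m by auto
  have t1b: "real t1 \<le> C * log 2 n + 1" unfolding t1 using l1 by linarith
  have t2b: "real t2 \<le> C * log 2 m + 1" unfolding t2 using l2 by linarith
  have "q powr (C * log 2 m) = 2 powr (-1/(8*C) * (C * log 2 m))" unfolding q by (simp add: powr_powr)
  also have "-1/(8*C) * (C * log 2 m) = log 2 m * (-1/8)" using C by (simp add: field_simps)
  also have "2 powr (log 2 m * (-1/8)) = (2 powr log 2 m) powr (-1/8)" by (simp add: powr_powr)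
  also have "\<dots> = m powr (-1/8)" using m by simp
  finally have qp: "q powr (C * log 2 m) = m powr (-1/8)" .
  have "q * m powr (-1/8) = q powr (C * log 2 m + 1)" using q0 by (simp add: powr_add qp)
  also have "\<dots> \<le> q powr t2" using q0 t2b by (intro powr_mono') auto
  also have "\<dots> = q^t2" using q0 by (simp add: powr_realpow)
  finally have qt: "q * m powr (-1/8) \<le> q^t2" .
  have mp: "m powr (-1/8) > 0" using m by simp
  have "real t1 / q^t2 \<le> (C * log 2 n + 1) / (q * m powr (-1/8))"
    using t1b qt q0 mp l1 by (intro frac_le) auto
  also have "\<dots> = (C * log 2 n + 1) * m powr (1/8) / q"
    using q0 mp by (simp add: powr_minus_divide field_simps)
  also have "\<dots> \<le> (C * log 2 n + 1) * (2*n) powr (1/8) / q"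
    using q0 l1 m by (intro divide_right_mono mult_left_mono powr_mono2) auto
  finally show ?thesis .
qed



lemma divset_sym: "divset V2 E x y = divset V2 E y x"
  unfolding divset_def by auto

lemma nbhd_sub: "nbhd V2 E x \<subseteq> V2" unfolding nbhd_def by auto

lemma main_matching:
  fixes C q \<delta> \<eta> \<epsilon> :: real and V1 V2 :: "nat set" and E :: "(nat \<times> nat) set" and n m :: nat
  assumes C: "C > 1" and q: "q = 2 powr (-1/(8*C))" and dl: "\<delta> = (1-q)/2" and et: "\<eta> = \<delta>/4"
    and ep: "\<epsilon> = \<delta>*\<eta>"
    and bg: "bipartite_graph V1 V2 E" and rams: "bip_ramsey C V1 V2 E"
    and n: "n = card V1" and m: "m = card V2" and nm: "real n \<ge> real m / 2"
    and hm: "\<eta>*m \<ge> 2*(C*log 2 m + 1)" "m \<ge> 16"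
    and hn: "12*((C*log 2 n + 1)*(2*n) powr (1/8)/q) + 2 \<le> sqrt n" "n \<ge> 2"
  shows "\<exists>p k. real k \<ge> real n powr 0.5 \<and> pair_matching \<epsilon> V1 V2 E p k"
proof -
  have fin: "finite V1" "finite V2" using bg unfolding bipartite_graph_def by auto
  have "2 powr (-1/(8*C)) < 2 powr 0" using C by (intro powr_less_mono) auto
  hence q0: "0 < q" "q < 1" unfolding q using C by auto
  have d0: "0 < \<delta>" "\<delta> < 1/2" "1 - 2*\<delta> = q" using q0 dl by auto
  have e0: "0 < \<eta>" "\<eta> < 1/2" using d0 et by auto
  define t1 where "t1 = nat \<lceil>C * log 2 (real n)\<rceil>"
  define t2 where "t2 = nat \<lceil>C * log 2 (real m)\<rceil>"
  define Lr where "Lr = real t1 / q^t2"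
  have Lr0: "Lr \<ge> 0" unfolding Lr_def using q0 by simp
  have LrB: "Lr \<le> (C * log 2 n + 1) * (2*n) powr (1/8) / q"
    unfolding Lr_def using Lr_bound[OF C q _ _ _ t1_def t2_def] hm nm hn by auto
  have t2b: "2 * real t2 \<le> \<eta> * m"
  proof -
    have "C * log 2 m \<ge> 0" using C hm by auto
    hence "real t2 \<le> C * log 2 m + 1" unfolding t2_def by linarith
    hence "2*real t2 \<le> 2*(C*log 2 m + 1)" by (intro mult_left_mono) auto
    thus ?thesis using hm(1) by (rule order_trans)
  qed
  have degm: "\<And>x. card (nbhd V2 E x) \<le> m" unfolding m using fin by (intro card_mono nbhd_sub) auto
  have RB: "real (card S) < Lr" if SV: "S \<subseteq> V1" and DV: "D \<subseteq> V2" and Dm: "\<eta>*m \<le> card D"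
    and hyp: "\<forall>v\<in>S. real (card {w\<in>D. ((v,w)\<in>E) \<noteq> b}) \<le> \<delta> * card D" for S D b
  proof -
    have "2*t2 \<le> card D" using t2b Dm by linarith
    from ramsey_bound[OF bg rams SV DV less_imp_le[OF d0(1)] d0(2) this _ _ hyp, of t1]
    have "real (card S) * q^t2 < t1" using d0 unfolding t1_def t2_def n m by simp
    thus ?thesis unfolding Lr_def using q0 by (simp add: pos_less_divide_eq)
  qed
  have ClA: "real (card S) \<le> Lr" if SV: "S \<subseteq> V1"
    and cl: "\<forall>x\<in>S. \<forall>y\<in>S. real (card (divset V2 E x y)) < 2*\<eta>*m" for S
  proof (cases "S = {}")
    case True thus ?thesis using Lr0 by simp
  next
    case False
    then obtain x where x: "x \<in> S" by auto
    have fD: "finite (divset V2 E x y)" for y using fin unfolding divset_def nbhd_def by auto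
    show ?thesis
    proof (cases "2 * card (nbhd V2 E x) \<ge> m")
      case True
      have "\<forall>v\<in>S. real (card {w\<in>nbhd V2 E x. ((v,w)\<in>E) \<noteq> True}) \<le> \<delta> * card (nbhd V2 E x)"
      proof
        fix y assume y: "y \<in> S"
        have "{w\<in>nbhd V2 E x. ((y,w)\<in>E) \<noteq> True} \<subseteq> divset V2 E x y"
          unfolding divset_def nbhd_def by auto
        hence "card {w\<in>nbhd V2 E x. ((y,w)\<in>E) \<noteq> True} \<le> card (divset V2 E x y)"
          using fD by (intro card_mono) auto
        moreover have "2*\<eta>*m \<le> \<delta> * card (nbhd V2 E x)"
        proof -
          have "real m \<le> 2 * card (nbhd V2 E x)" using True by linarith
          hence "2*\<eta>*m \<le> 2*\<eta>*(2 * card (nbhd V2 E x))" using e0 by (intro mult_left_mono) auto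
          thus ?thesis unfolding et by (simp add: algebra_simps)
        qed
        ultimately show "real (card {w\<in>nbhd V2 E x. ((y,w)\<in>E) \<noteq> True}) \<le> \<delta> * card (nbhd V2 E x)"
          using cl x y by force
      qed
      moreover have "\<eta>*m \<le> card (nbhd V2 E x)"
      proof -
        have "real m \<le> 2 * card (nbhd V2 E x)" using True by linarith
        hence "\<eta>*m \<le> (1/2)*(2 * card (nbhd V2 E x))" using e0 by (intro mult_mono) auto
        thus ?thesis by simp
      qed
      ultimately have "real (card S) < Lr" using RB[OF SV nbhd_sub[of V2 E x]] by blast
      thus ?thesis by simp
    next
      case False
      define D where "D = V2 - nbhd V2 E x"
      have cD: "card D = m - card (nbhd V2 E x)" unfolding D_def m
        using fin by (meson card_Diff_subset nbhd_sub finite_subset)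
      have cD2: "2 * card D \<ge> m" using cD False by auto
      have "\<forall>v\<in>S. real (card {w\<in>D. ((v,w)\<in>E) \<noteq> False}) \<le> \<delta> * card D"
      proof
        fix y assume y: "y \<in> S"
        have "{w\<in>D. ((y,w)\<in>E) \<noteq> False} \<subseteq> divset V2 E x y"
          unfolding divset_def nbhd_def D_def by auto
        hence "card {w\<in>D. ((y,w)\<in>E) \<noteq> False} \<le> card (divset V2 E x y)"
          using fD by (intro card_mono) auto
        moreover have "2*\<eta>*m \<le> \<delta> * card D"
        proof -
          have "real m \<le> 2 * card D" using cD2 by linarith
          hence "2*\<eta>*m \<le> 2*\<eta>*(2 * card D)" using e0 by (intro mult_left_mono) auto
          thus ?thesis unfolding et by (simp add: algebra_simps)
        qed
        ultimately show "real (card {w\<in>D. ((y,w)\<in>E) \<noteq> False}) \<le> \<delta> * card D"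
          using cl x y by force
      qed
      moreover have "\<eta>*m \<le> card D"
      proof -
        have "real m \<le> 2 * card D" using cD2 by linarith
        hence "\<eta>*m \<le> (1/2)*(2 * card D)" using e0 by (intro mult_mono) auto
        thus ?thesis by simp
      qed
      moreover have "D \<subseteq> V2" unfolding D_def by auto
      ultimately have "real (card S) < Lr" using RB[OF SV, of D] by blast
      thus ?thesis by simp
    qed
  qed
  define good where "good p \<longleftrightarrow> fst p \<in> V1 \<and> snd p \<in> V1 \<and> fst p \<noteq> snd p \<and>
     card (nbhd V2 E (snd p) - nbhd V2 E (fst p)) \<le> card (nbhd V2 E (fst p) - nbhd V2 E (snd p)) \<and>
     real (deg V2 E (fst p)) - real (deg V2 E (snd p)) \<le> sqrt m \<and>
     2*\<eta>*m \<le> real (card (divset V2 E (fst p) (snd p)))" for p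
  define Bad where "Bad p = {v\<in>V1. real (card (nbhd V2 E (fst p) - nbhd V2 E (snd p) - nbhd V2 E v)) < \<epsilon>*m}" for p
  have BadB: "real (card (Bad p)) \<le> Lr" if gp: "good p" for p
  proof -
    define D where "D = nbhd V2 E (fst p) - nbhd V2 E (snd p)"
    have DV: "D \<subseteq> V2" unfolding D_def using nbhd_sub by auto
    have finN: "finite (nbhd V2 E z)" for z using fin finite_subset nbhd_sub by metis
    have "card (divset V2 E (fst p) (snd p)) \<le> card D + card (nbhd V2 E (snd p) - nbhd V2 E (fst p))"
      unfolding divset_def D_def by (rule card_Un_le)
    hence "card (divset V2 E (fst p) (snd p)) \<le> 2 * card D" using gp unfolding good_def D_def by auto
    hence Dm: "\<eta>*m \<le> card D" using gp unfolding good_def by linarith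
    have "\<forall>v\<in>Bad p. real (card {w\<in>D. ((v,w)\<in>E) \<noteq> True}) \<le> \<delta> * card D"
    proof
      fix v assume v: "v \<in> Bad p"
      have "{w\<in>D. ((v,w)\<in>E) \<noteq> True} = D - nbhd V2 E v" using DV unfolding nbhd_def by auto
      hence "real (card {w\<in>D. ((v,w)\<in>E) \<noteq> True}) < \<epsilon>*m" using v unfolding Bad_def D_def by auto
      moreover have "\<epsilon>*m \<le> \<delta> * card D" unfolding ep using Dm d0
        by (simp add: mult.assoc mult_left_mono)
      ultimately show "real (card {w\<in>D. ((v,w)\<in>E) \<noteq> True}) \<le> \<delta> * card D" by simp
    qed
    moreover have "Bad p \<subseteq> V1" unfolding Bad_def by auto
    ultimately have "real (card (Bad p)) < Lr" using RB[OF _ DV Dm] by blast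
    thus ?thesis by simp
  qed
  define valid where "valid F \<longleftrightarrow> F \<subseteq> Collect good \<and>
     (\<forall>p\<in>F. \<forall>p'\<in>F. p\<noteq>p' \<longrightarrow> {fst p, snd p} \<inter> {fst p', snd p'} = {})" for F
  have vsub: "valid F \<Longrightarrow> F \<subseteq> V1 \<times> V1" for F unfolding valid_def good_def by force
  have "\<exists>F. valid F \<and> (\<forall>F'. valid F' \<longrightarrow> card F' \<le> card F)"
  proof (rule ex_has_greatest_nat[of valid "{}" card "card (V1\<times>V1) + 1"])
    show "valid {}" unfolding valid_def by auto
    show "\<forall>F. valid F \<longrightarrow> card F < card (V1 \<times> V1) + 1"
      using vsub fin by (metis card_mono finite_SigmaI less_add_one order_le_less_trans)
  qed
  then obtain F where vF: "valid F" and maxF: "\<And>F'. valid F' \<Longrightarrow> card F' \<le> card F" by blast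
  have finF: "finite F" using vsub[OF vF] fin by (meson finite_SigmaI finite_subset)
  have goodF: "\<And>p. p \<in> F \<Longrightarrow> good p" using vF unfolding valid_def by auto
  have disjF: "\<And>p p'. p \<in> F \<Longrightarrow> p' \<in> F \<Longrightarrow> p \<noteq> p' \<Longrightarrow> {fst p, snd p} \<inter> {fst p', snd p'} = {}"
    using vF unfolding valid_def by auto
  show ?thesis
  proof (cases "real (card F) \<ge> (4*Lr+1) * sqrt n")
    case True
    define R where "R p p' \<longleftrightarrow> fst p' \<in> Bad p \<or> snd p' \<in> Bad p" for p p'
    have injf: "inj_on fst F" using disjF unfolding inj_on_def by blast
    have injs: "inj_on snd F" using disjF unfolding inj_on_def by blast
    have finB: "finite (Bad p)" for p using fin unfolding Bad_def by auto
    have outd: "\<forall>p\<in>F. real (card {p'\<in>F. R p p'}) \<le> 2*Lr"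
    proof
      fix p assume pF: "p \<in> F"
      have "card {p'\<in>F. R p p'} \<le> card {p'\<in>F. fst p' \<in> Bad p} + card {p'\<in>F. snd p' \<in> Bad p}"
      proof -
        have "{p'\<in>F. R p p'} = {p'\<in>F. fst p' \<in> Bad p} \<union> {p'\<in>F. snd p' \<in> Bad p}"
          unfolding R_def by auto
        thus ?thesis by (simp add: card_Un_le)
      qed
      moreover have "card {p'\<in>F. fst p' \<in> Bad p} \<le> card (Bad p)"
        by (rule card_inj_on_le[OF inj_on_subset[OF injf]]) (auto simp: finB)
      moreover have "card {p'\<in>F. snd p' \<in> Bad p} \<le> card (Bad p)"
        by (rule card_inj_on_le[OF inj_on_subset[OF injs]]) (auto simp: finB)
      ultimately show "real (card {p'\<in>F. R p p'}) \<le> 2*Lr" using BadB[OF goodF[OF pF]] by linarith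
    qed
    obtain I where I: "I \<subseteq> F" "real (card I) * (2*(2*Lr)+1) \<ge> card F"
      "\<forall>i\<in>I. \<forall>j\<in>I. i\<noteq>j \<longrightarrow> \<not> R i j"
      using indep[OF finF outd] Lr0 by auto
    have "(4*Lr+1) * sqrt n \<le> real (card I) * (4*Lr+1)" using True I(2) by simp
    hence kI: "real (card I) \<ge> sqrt n" using Lr0
      by (metis mult.commute mult_le_cancel_right_pos add_nonneg_pos zero_less_one mult_nonneg_nonneg
          zero_le_numeral)
    have finI: "finite I" using I(1) finF finite_subset by auto
    obtain h where h: "bij_betw h {0..<card I} I" using ex_bij_betw_nat_finite[OF finI] by auto
    have hI: "\<And>i. i < card I \<Longrightarrow> h i \<in> I" using h unfolding bij_betw_def by auto
    have hinj: "\<And>i j. i < card I \<Longrightarrow> j < card I \<Longrightarrow> i \<noteq> j \<Longrightarrow> h i \<noteq> h j"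
      using h unfolding bij_betw_def inj_on_def by auto
    have sqm: "real m powr 0.5 = sqrt m" using powr_half_sqrt[of "real m"] by simp
    have pm: "pair_matching \<epsilon> V1 V2 E h (card I)"
      unfolding pair_matching_def
    proof (intro conjI allI impI)
      fix i assume i: "i < card I"
      have g: "good (h i)" using goodF[OF subsetD[OF I(1) hI[OF i]]] .
      show "fst (h i) \<in> V1" "snd (h i) \<in> V1" "fst (h i) \<noteq> snd (h i)" using g unfolding good_def by auto
      show "divb V2 E (fst (h i)) (snd (h i)) = nbhd V2 E (fst (h i)) - nbhd V2 E (snd (h i))"
        using g unfolding good_def divb_def by auto
      show "real (deg V2 E (fst (h i))) - real (deg V2 E (snd (h i))) \<le> real (card V2) powr 0.5"
        using g sqm unfolding good_def m by auto
    next
      fix i j assume i: "i < card I" and j: "j < card I" and ij: "i \<noteq> j"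
      have hij: "h i \<noteq> h j" using hinj i j ij by auto
      have g: "good (h i)" "good (h j)" using goodF[OF subsetD[OF I(1) hI[OF i]]] goodF[OF subsetD[OF I(1) hI[OF j]]] by auto
      show "{fst (h i), snd (h i)} \<inter> {fst (h j), snd (h j)} = {}"
        using disjF[OF subsetD[OF I(1) hI[OF i]] subsetD[OF I(1) hI[OF j]] hij] .
      have nR: "\<not> R (h i) (h j)" using I(3) hI[OF i] hI[OF j] hij by auto
      have db: "divb V2 E (fst (h i)) (snd (h i)) = nbhd V2 E (fst (h i)) - nbhd V2 E (snd (h i))"
        using g unfolding good_def divb_def by auto
      show "\<epsilon> * real (card V2) \<le> real (card (divb V2 E (fst (h i)) (snd (h i)) - nbhd V2 E (fst (h j))))"
        using nR g(2) unfolding R_def Bad_def db good_def m by auto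
      show "\<epsilon> * real (card V2) \<le> real (card (divb V2 E (fst (h i)) (snd (h i)) - nbhd V2 E (snd (h j))))"
        using nR g(2) unfolding R_def Bad_def db good_def m by auto
    qed
    have "real n powr 0.5 = sqrt n" using powr_half_sqrt[of "real n"] by simp
    thus ?thesis using pm kI by auto
  next
    case False
    define U where "U = fst ` F \<union> snd ` F"
    define R0 where "R0 = V1 - U"
    have finU: "finite U" unfolding U_def using finF by auto
    have cU: "card U \<le> 2 * card F"
    proof -
      have "card U \<le> card (fst ` F) + card (snd ` F)" unfolding U_def by (rule card_Un_le)
      moreover have "card (fst ` F) \<le> card F" "card (snd ` F) \<le> card F" by (rule card_image_le[OF finF])+
      ultimately show ?thesis by linarith
    qed
    have cR0: "n \<le> card R0 + card U"
    proof -
      have "V1 \<subseteq> R0 \<union> U" unfolding R0_def by auto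
      hence "card V1 \<le> card (R0 \<union> U)" using fin finU unfolding R0_def by (intro card_mono) auto
      also have "\<dots> \<le> card R0 + card U" by (rule card_Un_le)
      finally show ?thesis unfolding n .
    qed
    have close: "real (card (divset V2 E x y)) < 2*\<eta>*m"
      if x: "x \<in> R0" and y: "y \<in> R0" and dxy: "\<bar>real (deg V2 E x) - real (deg V2 E y)\<bar> \<le> sqrt m" for x y
    proof (rule ccontr)
      assume big: "\<not> ?thesis"
      have m0: "0 < 2*\<eta>*m" using e0 hm by auto
      have xy: "x \<noteq> y"
      proof
        assume "x = y"
        hence "divset V2 E x y = {}" unfolding divset_def by auto
        thus False using big m0 by simp
      qed
      define p where "p = (if card (nbhd V2 E y - nbhd V2 E x) \<le> card (nbhd V2 E x - nbhd V2 E y)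
                          then (x,y) else (y,x))"
      have xV: "x \<in> V1" "y \<in> V1" using x y unfolding R0_def by auto
      have d1: "real (deg V2 E x) - real (deg V2 E y) \<le> sqrt m" "real (deg V2 E y) - real (deg V2 E x) \<le> sqrt m"
        using dxy by linarith+
      have bg2: "2*\<eta>*m \<le> real (card (divset V2 E x y))" "2*\<eta>*m \<le> real (card (divset V2 E y x))"
        using big divset_sym[of V2 E x y] by auto
      have gp: "good p"
      proof (cases "card (nbhd V2 E y - nbhd V2 E x) \<le> card (nbhd V2 E x - nbhd V2 E y)")
        case True
        hence "p = (x,y)" by (simp add: p_def)
        thus ?thesis unfolding good_def using True xV xy d1 bg2 by simp
      next
        case False
        hence "p = (y,x)" by (simp add: p_def)
        thus ?thesis unfolding good_def using False xV xy d1 bg2 by simp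
      qed
      have "x \<notin> U" "y \<notin> U" using x y unfolding R0_def by auto
      hence pU: "fst p \<notin> U" "snd p \<notin> U" unfolding p_def by auto
      have pF: "p \<notin> F" using pU unfolding U_def by blast
      have "valid (insert p F)"
        unfolding valid_def
      proof (intro conjI ballI impI)
        show "insert p F \<subseteq> Collect good" using gp goodF by auto
      next
        fix a b assume a: "a \<in> insert p F" and b: "b \<in> insert p F" and ab: "a \<noteq> b"
        show "{fst a, snd a} \<inter> {fst b, snd b} = {}"
        proof (cases "a = p")
          case True
          hence "b \<in> F" using b ab by auto
          hence "fst b \<in> U" "snd b \<in> U" unfolding U_def by auto
          thus ?thesis using True pU by auto
        next
          case False
          hence aF: "a \<in> F" using a by auto
          show ?thesis
          proof (cases "b = p")
            case True
            have "fst a \<in> U" "snd a \<in> U" using aF unfolding U_def by auto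
            thus ?thesis using True pU by auto
          next
            case False
            hence "b \<in> F" using b by auto
            thus ?thesis using aF disjF ab by blast
          qed
        qed
      qed
      hence "card (insert p F) \<le> card F" by (rule maxF)
      thus False using pF finF by simp
    qed
    define s where "s = nat \<lfloor>sqrt m\<rfloor>"
    have sqm4: "sqrt m \<ge> 4" using hm(2) real_sqrt_le_mono[of 16 "real m"] by simp
    have s1: "s \<ge> 1" "real s \<le> sqrt m" "real s \<ge> sqrt m - 1" unfolding s_def using sqm4 by linarith+
    define Bk where "Bk b = {v\<in>R0. deg V2 E v div s = b}" for b
    have R0U: "R0 = (\<Union>b\<in>{..m div s}. Bk b)"
    proof
      show "R0 \<subseteq> (\<Union>b\<in>{..m div s}. Bk b)"
      proof
        fix v assume "v \<in> R0"
        moreover have "deg V2 E v div s \<le> m div s" using degm unfolding deg_def by (simp add: div_le_mono)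
        ultimately show "v \<in> (\<Union>b\<in>{..m div s}. Bk b)" unfolding Bk_def by auto
      qed
    qed (auto simp: Bk_def)
    have Bkb: "real (card (Bk b)) \<le> Lr" for b
    proof (rule ClA)
      show "Bk b \<subseteq> V1" unfolding Bk_def R0_def by auto
      show "\<forall>x\<in>Bk b. \<forall>y\<in>Bk b. real (card (divset V2 E x y)) < 2*\<eta>*m"
      proof (intro ballI)
        fix x y assume x: "x \<in> Bk b" and y: "y \<in> Bk b"
        have "deg V2 E x div s = deg V2 E y div s" using x y unfolding Bk_def by auto
        hence "deg V2 E x < deg V2 E y + s" "deg V2 E y < deg V2 E x + s"
          using div_eq_close s1(1) by auto
        hence "\<bar>real (deg V2 E x) - real (deg V2 E y)\<bar> \<le> sqrt m" using s1(2) by linarith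
        thus "real (card (divset V2 E x y)) < 2*\<eta>*m" using close x y unfolding Bk_def by auto
      qed
    qed
    have finBk: "finite (Bk b)" for b using fin unfolding Bk_def R0_def by auto
    have "card R0 \<le> (\<Sum>b\<in>{..m div s}. card (Bk b))" unfolding R0U by (rule card_UN_le) auto
    hence "real (card R0) \<le> (\<Sum>b\<in>{..m div s}. real (card (Bk b)))" by (simp flip: of_nat_sum)
    also have "\<dots> \<le> (\<Sum>b\<in>{..m div s}. Lr)" using Bkb by (intro sum_mono) auto
    also have "\<dots> = (real (m div s) + 1) * Lr" by simp
    finally have cR0b: "real (card R0) \<le> (real (m div s) + 1) * Lr" .
    have "real (m div s) \<le> real m / real s" by (rule of_nat_div_le_of_nat)
    also have "\<dots> \<le> 2 * sqrt m"
    proof -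
      have "sqrt m \<le> 2 * real s" using s1 sqm4 by linarith
      hence "sqrt m * sqrt m \<le> sqrt m * (2 * real s)" by (intro mult_left_mono) auto
      hence "real m \<le> 2 * sqrt m * real s" by simp
      thus ?thesis using s1 by (simp add: divide_le_eq)
    qed
    also have "\<dots> \<le> 2 * sqrt (2 * n)" using nm by simp
    also have "\<dots> = 2 * sqrt 2 * sqrt n" by (simp add: real_sqrt_mult)
    also have "\<dots> \<le> 3 * sqrt n"
    proof -
      have "sqrt 2 \<le> 1.5" by (rule real_le_lsqrt) (auto simp: power2_eq_square)
      thus ?thesis by (intro mult_right_mono) auto
    qed
    finally have mds: "real (m div s) \<le> 3 * sqrt n" .
    have sqn1: "sqrt n \<ge> 1" using hn(2) by simp
    have "real (card R0) \<le> 4 * sqrt n * Lr"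
    proof -
      have "real (m div s) + 1 \<le> 4 * sqrt n" using mds sqn1 by linarith
      thus ?thesis using cR0b Lr0 mult_right_mono[of "real (m div s) + 1" "4 * sqrt n" Lr] by linarith
    qed
    hence "real n \<le> 4 * sqrt n * Lr + 2 * card F" using cR0 cU by linarith
    also have "\<dots> < 4 * sqrt n * Lr + 2 * ((4*Lr+1) * sqrt n)" using False by simp
    also have "\<dots> = sqrt n * (12*Lr + 2)" by (simp add: algebra_simps)
    also have "\<dots> \<le> sqrt n * sqrt n"
      using hn(1) LrB by (intro mult_left_mono) auto
    also have "\<dots> = real n" by simp
    finally show ?thesis by simp
  qed
qed



lemma ev1: "C > 0 \<Longrightarrow> \<eta> > 0 \<Longrightarrow> eventually (\<lambda>x::real. 2*(C*log 2 x + 1) \<le> \<eta> * x) at_top"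
  by real_asymp

lemma ev2: "C > 0 \<Longrightarrow> q > 0 \<Longrightarrow> eventually (\<lambda>x::real. 12*((C*log 2 x + 1)*(2*x) powr (1/8)/q) + 2 \<le> sqrt x) at_top"
  by real_asymp

theorem lemma3p1:
  fixes C :: real
  assumes "C > 1"
  shows "\<exists>eps > 0. \<exists>nC :: nat. \<forall>V1 V2 :: nat set. \<forall>E.
           bipartite_graph V1 V2 E \<longrightarrow> bip_ramsey C V1 V2 E \<longrightarrow>
           real (card V1) \<ge> real (card V2) / 2 \<longrightarrow> real (card V2) / 2 \<ge> real nC \<longrightarrow>
           (\<exists>x0 X k. real k \<ge> real (card V1) powr 0.5 \<and> pair_star eps V1 V2 E x0 X k) \<or>
           (\<exists>p k. real k \<ge> real (card V1) powr 0.5 \<and> pair_matching eps V1 V2 E p k)"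
proof -
  define q where "q = 2 powr (-1/(8*C))"
  define \<delta> where "\<delta> = (1-q)/2"
  define \<eta> where "\<eta> = \<delta>/4"
  define \<epsilon> where "\<epsilon> = \<delta>*\<eta>"
  have "2 powr (-1/(8*C)) < 2 powr 0" using assms by (intro powr_less_mono) auto
  hence q0: "0 < q" "q < 1" unfolding q_def by auto
  have pos: "\<delta> > 0" "\<eta> > 0" "\<epsilon> > 0" using q0 unfolding \<delta>_def \<eta>_def \<epsilon>_def by auto
  have "eventually (\<lambda>x::real. (2*(C*log 2 x + 1) \<le> \<eta> * x \<and>
          12*((C*log 2 x + 1)*(2*x) powr (1/8)/q) + 2 \<le> sqrt x) \<and> x \<ge> 16) at_top"
    using ev1[of C \<eta>] ev2[of C q] assms pos q0 eventually_ge_at_top[of "16::real"]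
    by (intro eventually_conj) auto
  then obtain N :: real where N: "\<And>x. x \<ge> N \<Longrightarrow> (2*(C*log 2 x + 1) \<le> \<eta> * x \<and>
          12*((C*log 2 x + 1)*(2*x) powr (1/8)/q) + 2 \<le> sqrt x) \<and> x \<ge> 16"
    unfolding eventually_at_top_linorder by blast
  define nC where "nC = nat \<lceil>N\<rceil> + 16"
  have nCN: "real nC \<ge> N" "real nC \<ge> 16" unfolding nC_def by linarith+
  show ?thesis
  proof (intro exI[of _ \<epsilon>] conjI pos exI[of _ nC] allI impI disjI2)
    fix V1 V2 :: "nat set" and E
    assume bg: "bipartite_graph V1 V2 E" and rams: "bip_ramsey C V1 V2 E"
      and nm: "real (card V1) \<ge> real (card V2) / 2" and mC: "real (card V2) / 2 \<ge> real nC"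
    have mN: "real (card V2) \<ge> N" "real (card V1) \<ge> N" using nm mC nCN by linarith+
    have hm: "\<eta> * real (card V2) \<ge> 2*(C*log 2 (card V2) + 1)" "card V2 \<ge> 16"
      using N[OF mN(1)] by auto
    have hn: "12*((C*log 2 (card V1) + 1)*(real (2 * card V1)) powr (1/8)/q) + 2 \<le> sqrt (card V1)"
      "card V1 \<ge> 2" using N[OF mN(2)] by simp_all
    show "\<exists>p k. real k \<ge> real (card V1) powr 0.5 \<and> pair_matching \<epsilon> V1 V2 E p k"
      by (rule main_matching[OF assms q_def \<delta>_def \<eta>_def \<epsilon>_def bg rams refl refl nm hm hn])
  qed
qed


end
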